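(* Let $v>0$, $d>0$, $s\ge d/2$ and $\theta\in[0,\pi/3)$. Let $\Lambda_\theta=\{a\,d\,(\cos\theta,\sin\theta)+b\,d\,(\cos(\theta+\pi/3),\sin(\theta+\pi/3)) : a,b\in\mathbb{Z}\}$. Robots start at time $0$ at the positions $(s,0)+q$ for all $q\in\Lambda_\theta$ with $q_x\ge0$ (where $q=(q_x,q_y)$), and move with constant velocity $(-v,0)$; the robot starting at $(s,0)+q$ has reached the target by time $T$ iff $\|(s,0)+q-(vt,0)\|\le s$ for some $t\in[0,T]$. Let $N(T)$ be the number of robots that have reached the target by time $T$ and $f_h(T,\theta)=\frac{N(T)-1}{T}$. Then $\lim_{T\to\infty}f_h(T,\theta)$ exists and $$\lim_{T\to\infty}f_h(T,\theta)\in\left(\frac{4vs}{\sqrt3 d^2}-\frac{2v\cos(\theta-\pi/6)}{\sqrt3 d},\ \frac{4vs}{\sqrt3 d^2}+\frac{2v\cos(\theta-\pi/6)}{\sqrt3 d}\right].$$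
   Context: The target is the closed disc of radius $s$ centred at the origin. The robots form a hexagonal packing (triangular lattice of spacing $d$) whose hexagonal packing angle is $\theta$: the angle between the $x$-axis and the segment from any robot to one of its neighbours at $(x+d\cos\theta,y+d\sin\theta)$; by periodicity angles are taken in $[0,\pi/3)$. The robot with $q=0$ is the first to reach the target, at time $0$. $f_h(T,\theta)$ is the throughput at time $T$. *)

theory Defs
  imports "HOL-Analysis.Analysis"
begin

definition hex_lattice :: "real \<Rightarrow> real \<Rightarrow> (real \<times> real) set" where
  "hex_lattice d \<theta> =
     {(of_int a * d * cos \<theta> + of_int b * d * cos (\<theta> + pi/3),
       of_int a * d * sin \<theta> + of_int b * d * sin (\<theta> + pi/3)) | a b :: int. True}"

definition reached :: "real \<Rightarrow> real \<Rightarrow> real \<Rightarrow> real \<times> real \<Rightarrow> bool" where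
  "reached v s T q \<longleftrightarrow>
     (\<exists>t\<in>{0..T}. norm ((s + fst q - v * t, snd q) :: real \<times> real) \<le> s)"

definition N_reached :: "real \<Rightarrow> real \<Rightarrow> real \<Rightarrow> real \<Rightarrow> real \<Rightarrow> nat" where
  "N_reached v d s \<theta> T = card {q \<in> hex_lattice d \<theta>. fst q \<ge> 0 \<and> reached v s T q}"

definition f_h :: "real \<Rightarrow> real \<Rightarrow> real \<Rightarrow> real \<Rightarrow> real \<Rightarrow> real" where
  "f_h v d s T \<theta> = (real (N_reached v d s \<theta> T) - 1) / T"

end

theory Submission
  imports Defs
begin


lemma card_ge_nat: "card {j. j < (M::nat) \<and> R \<le> real j} = M - nat \<lceil>R\<rceil>"
proof -
  have "{j. j < M \<and> R \<le> real j} = {nat \<lceil>R\<rceil>..<M}"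
    by (auto simp: ceiling_le_iff nat_le_iff le_nat_iff)
  then show ?thesis by simp
qed

lemma gauss_real: "(\<Sum>j<n. real j) = real n * (real n - 1) / 2"
  by (induction n) (simp_all add: field_simps)

lemma frac_shift_c: "frac (x + y) = frac (frac x + y)"
proof -
  have "x + y = (frac x + y) + of_int \<lfloor>x\<rfloor>" unfolding frac_def by simp
  then show ?thesis by (metis frac_add_of_int_right)
qed

lemma aux_h1: "(P::real) \<le> 1 * (m - 1) \<Longrightarrow> P / 2 \<le> m / 2 - 1/2" by (simp add: field_simps)
lemma aux_fin: "(S::real) = M * c + d * G - K \<Longrightarrow> c * M - 2 \<le> K \<and> K \<le> c * M \<Longrightarrow>
   d * G \<le> M / 2 - 1 / 2 \<Longrightarrow> M / 2 - 1 \<le> d * G \<Longrightarrow> \<bar>S - M/2\<bar> \<le> 2"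
  by (simp add: abs_le_iff algebra_simps)
lemma aux_h2: "(1 - d) * (m - 1) \<le> (P::real) \<Longrightarrow> d * (m - 1) \<le> 1 \<Longrightarrow> m / 2 - 1 \<le> P / 2"
  by (simp add: algebra_simps)

lemma frac_block:
  fixes \<delta> x :: real
  assumes d0: "0 < \<delta>" and d1: "\<delta> \<le> 1"
  shows "\<bar>(\<Sum>j<nat \<lfloor>1/\<delta>\<rfloor>. frac (x + real j * \<delta>)) - real (nat \<lfloor>1/\<delta>\<rfloor>) / 2\<bar> \<le> 2"
proof -
  define M where "M = nat \<lfloor>1/\<delta>\<rfloor>"
  define c where "c = frac x"
  have c01: "0 \<le> c" "c < 1" by (auto simp: c_def frac_lt_1)
  have M1: "real M \<le> 1/\<delta>" "1/\<delta> < real M + 1"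
    unfolding M_def using d0 d1 by (simp_all add: of_nat_nat)
  have Md: "real M * \<delta> \<le> 1" "1 - \<delta> < real M * \<delta>"
    using M1 d0 by (simp_all add: field_simps)
  have M1': "1 \<le> real M"
  proof -
    have "1 \<le> 1/\<delta>" using d0 d1 by simp
    then have "0 < real M" using M1 by linarith
    then have "1 \<le> M" by simp
    then show ?thesis by simp
  qed
  define R where "R = (1 - c) / \<delta>"
  have Rpos: "R > 0" unfolding R_def using c01 d0 by simp
  have fr: "frac (x + real j * \<delta>) = c + real j * \<delta> - (if R \<le> real j then 1 else 0)"
    if "j < M" for j
  proof -
    have f1: "frac (x + real j * \<delta>) = frac (c + real j * \<delta>)"
      unfolding c_def by (rule frac_shift_c)
    have f2: "real j * \<delta> \<le> 1 - \<delta>"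
    proof -
      have "real j + 1 \<le> real M" using that by linarith
      then have "(real j + 1) * \<delta> \<le> real M * \<delta>" using d0 by (intro mult_right_mono) auto
      then show ?thesis using Md by (simp add: algebra_simps)
    qed
    have f3: "R \<le> real j \<longleftrightarrow> 1 \<le> c + real j * \<delta>"
      unfolding R_def using d0 by (simp add: pos_divide_le_eq algebra_simps)
    have f4: "0 \<le> real j * \<delta>" using d0 by simp
    have f5: "\<lfloor>c + real j * \<delta>\<rfloor> = (if 1 \<le> c + real j * \<delta> then 1 else 0)"
    proof (cases "1 \<le> c + real j * \<delta>")
      case True
      then have "\<lfloor>c + real j * \<delta>\<rfloor> = 1" using f2 c01 d0 by (simp add: floor_eq_iff)
      then show ?thesis using True by simp
    next
      case False
      then have "\<lfloor>c + real j * \<delta>\<rfloor> = 0" using f4 c01 by (simp add: floor_eq_iff)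
      then show ?thesis using False by simp
    qed
    have f6: "frac (c + real j * \<delta>) = c + real j * \<delta> - of_int \<lfloor>c + real j * \<delta>\<rfloor>"
      by (simp add: frac_def)
    show ?thesis unfolding f1 f3 f6 f5 by simp
  qed
  define K where "K = card {j. j < M \<and> R \<le> real j}"
  have K: "K = M - nat \<lceil>R\<rceil>" unfolding K_def by (rule card_ge_nat)
  have sum_eq: "(\<Sum>j<M. frac (x + real j * \<delta>)) = real M * c + \<delta> * (\<Sum>j<M. real j) - real K"
  proof -
    have "(\<Sum>j<M. frac (x + real j * \<delta>)) = (\<Sum>j<M. c + real j * \<delta> - (if R \<le> real j then 1 else 0))"
      by (rule sum.cong) (auto simp: fr)
    also have "\<dots> = real M * c + \<delta> * (\<Sum>j<M. real j) - (\<Sum>j<M. (if R \<le> real j then 1 else 0))"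
      by (simp add: sum.distrib sum_subtractf sum_distrib_left mult.commute)
    also have "(\<Sum>j<M. (if R \<le> real j then 1 else 0::real)) = real K"
    proof -
      have "(\<Sum>j<M. (if R \<le> real j then 1 else 0::real)) = (\<Sum>j\<in>{j. j < M \<and> R \<le> real j}. 1)"
        by (rule sum.mono_neutral_cong_right) auto
      then show ?thesis unfolding K_def by simp
    qed
    finally show ?thesis .
  qed
  have R1: "(1 - c) * real M \<le> R"
  proof -
    have "(1 - c) * real M \<le> (1 - c) * (1/\<delta>)" using M1 c01 by (intro mult_left_mono) auto
    then show ?thesis unfolding R_def by simp
  qed
  have R2: "R \<le> (1 - c) * real M + 1"
  proof -
    have "R = (1 - c) * (1/\<delta>)" unfolding R_def by simp
    also have "\<dots> \<le> (1 - c) * (real M + 1)" using M1 c01 by (intro mult_left_mono) auto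
    finally show ?thesis using c01 by (simp add: algebra_simps)
  qed
  have ceil1: "R \<le> real (nat \<lceil>R\<rceil>)" "real (nat \<lceil>R\<rceil>) < R + 1"
  proof -
    have "R \<le> of_int \<lceil>R\<rceil>" by (rule le_of_int_ceiling)
    moreover have "of_int \<lceil>R\<rceil> < R + 1" using ceiling_correct[of R] by linarith
    moreover have "real (nat \<lceil>R\<rceil>) = of_int \<lceil>R\<rceil>" using Rpos by simp
    ultimately show "R \<le> real (nat \<lceil>R\<rceil>)" "real (nat \<lceil>R\<rceil>) < R + 1" by simp_all
  qed
  have R1': "real M - c * real M \<le> R" using R1 by (simp add: algebra_simps)
  have R2': "R \<le> real M - c * real M + 1" using R2 by (simp add: algebra_simps)
  have Kbounds: "c * real M - 2 \<le> real K \<and> real K \<le> c * real M"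
  proof (cases "nat \<lceil>R\<rceil> \<le> M")
    case True
    then have "real K = real M - real (nat \<lceil>R\<rceil>)" using K by (simp add: of_nat_diff)
    then show ?thesis using ceil1 R1' R2' by linarith
  next
    case False
    then have RM: "real M < R" by simp
    then have "real M < real (nat \<lceil>R\<rceil>)" using ceil1 by linarith
    then have "M \<le> nat \<lceil>R\<rceil>" by simp
    then have K0: "K = 0" using K by simp
    have "real M < R" using RM by linarith
    then have "c * real M < 1" using R2' by linarith
    then show ?thesis using K0 c01 by simp
  qed
  have eP: "\<delta> * (real M * (real M - 1) / 2) = (real M * \<delta>) * (real M - 1) / 2" by simp
  have h1: "\<delta> * (real M * (real M - 1) / 2) \<le> real M / 2 - 1/2"
  proof -
    have "(real M * \<delta>) * (real M - 1) \<le> 1 * (real M - 1)"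
      using Md M1' by (intro mult_right_mono) auto
    then show ?thesis unfolding eP by (rule aux_h1)
  qed
  have h2: "real M / 2 - 1 \<le> \<delta> * (real M * (real M - 1) / 2)"
  proof -
    have "(1 - \<delta>) * (real M - 1) \<le> (real M * \<delta>) * (real M - 1)"
      using Md M1' by (intro mult_right_mono) auto
    moreover have "\<delta> * (real M - 1) \<le> 1" using Md d0 by (simp add: algebra_simps)
    ultimately show ?thesis unfolding eP by (rule aux_h2)
  qed
  have "\<bar>(\<Sum>j<M. frac (x + real j * \<delta>)) - real M / 2\<bar> \<le> 2"
    using aux_fin[OF sum_eq[unfolded gauss_real[of M]] Kbounds h1 h2] .
  then show ?thesis unfolding M_def .
qed


definition Fs :: "real \<Rightarrow> real \<Rightarrow> nat \<Rightarrow> real" where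
  "Fs \<alpha> \<beta> m = (\<Sum>a<m. frac (\<beta> + real a * \<alpha>))"

lemma abstract_bound:
  fixes F S M m q :: real
  assumes A: "\<bar>S - m * M / 2\<bar> \<le> 2 * m" and B: "\<bar>S - M * F\<bar> \<le> M * (M * q)"
    and M: "M > 0" and m: "m > 0"
  shows "\<bar>F / m - 1/2\<bar> \<le> 2 / M + M * q / m"
proof -
  from A B have num: "\<bar>M * F - m * M / 2\<bar> \<le> 2 * m + M * (M * q)" by linarith
  have eq: "F / m - 1/2 = (M * F - m * M / 2) / (M * m)"
    using M m by (simp add: field_simps)
  have pos: "0 < M * m" using M m by simp
  have "\<bar>F / m - 1/2\<bar> = \<bar>M * F - m * M / 2\<bar> / (M * m)"
    unfolding eq using pos by (simp add: abs_divide)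
  also have "\<dots> \<le> (2 * m + M * (M * q)) / (M * m)"
    using num pos by (intro divide_right_mono) auto
  also have "\<dots> = 2 / M + M * q / m"
    using M m by (simp add: add_divide_distrib)
  finally show ?thesis .
qed

lemma swap_lemma:
  "(\<Sum>j<M. Fs \<alpha> (\<beta> + real j * \<delta>) m) = (\<Sum>a<m. \<Sum>j<M. frac ((\<beta> + real a * \<alpha>) + real j * \<delta>))"
proof -
  have "(\<Sum>j<M. Fs \<alpha> (\<beta> + real j * \<delta>) m) = (\<Sum>j<M. \<Sum>a<m. frac ((\<beta> + real a * \<alpha>) + real j * \<delta>))"
    unfolding Fs_def by (intro sum.cong refl) (simp only: ac_simps)
  also have "\<dots> = (\<Sum>a<m. \<Sum>j<M. frac ((\<beta> + real a * \<alpha>) + real j * \<delta>))"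
    by (rule sum.swap)
  finally show ?thesis .
qed

lemma sum_dev:
  fixes f :: "nat \<Rightarrow> real"
  assumes "\<And>a. a < m \<Longrightarrow> \<bar>f a - c\<bar> \<le> e"
  shows "\<bar>(\<Sum>a<m. f a) - real m * c\<bar> \<le> real m * e"
proof -
  have "\<bar>(\<Sum>a<m. f a) - real m * c\<bar> = \<bar>\<Sum>a<m. (f a - c)\<bar>" by (simp add: sum_subtractf)
  also have "\<dots> \<le> (\<Sum>a<m. \<bar>f a - c\<bar>)" by (rule sum_abs)
  also have "\<dots> \<le> (\<Sum>a<m. e)" using assms by (intro sum_mono) auto
  finally show ?thesis by simp
qed
lemma Fs_shift1: "\<bar>Fs \<alpha> (\<beta> + \<alpha>) m - Fs \<alpha> \<beta> m\<bar> \<le> 1"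
proof -
  have "Fs \<alpha> (\<beta> + \<alpha>) m - Fs \<alpha> \<beta> m = (\<Sum>a<m. frac (\<beta> + real (Suc a) * \<alpha>) - frac (\<beta> + real a * \<alpha>))"
    unfolding Fs_def by (simp add: sum_subtractf algebra_simps)
  also have "\<dots> = frac (\<beta> + real m * \<alpha>) - frac (\<beta> + real 0 * \<alpha>)"
    by (rule sum_lessThan_telescope)
  finally have "Fs \<alpha> (\<beta> + \<alpha>) m - Fs \<alpha> \<beta> m = frac (\<beta> + real m * \<alpha>) - frac \<beta>" by simp
  moreover have "0 \<le> frac (\<beta> + real m * \<alpha>)" "frac (\<beta> + real m * \<alpha>) < 1" "0 \<le> frac \<beta>" "frac \<beta> < 1"
    by (auto simp: frac_lt_1)
  ultimately show ?thesis by linarith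
qed

lemma Fs_shift: "\<bar>Fs \<alpha> (\<beta> + real k * \<alpha>) m - Fs \<alpha> \<beta> m\<bar> \<le> real k"
proof (induction k)
  case 0 then show ?case by simp
next
  case (Suc k)
  have "\<bar>Fs \<alpha> (\<beta> + real k * \<alpha> + \<alpha>) m - Fs \<alpha> (\<beta> + real k * \<alpha>) m\<bar> \<le> 1" by (rule Fs_shift1)
  then show ?case using Suc by (simp add: algebra_simps)
qed

lemma Fs_int: "Fs \<alpha> (\<beta> + of_int z) m = Fs \<alpha> \<beta> m"
  unfolding Fs_def by (intro sum.cong refl) (metis add.assoc add.commute frac_add_of_int_right)

lemma Fs_irrational:
  assumes irr: "\<alpha> \<notin> \<rat>"
  shows "(\<lambda>m. Fs \<alpha> \<beta> m / real m) \<longlonglongrightarrow> 1/2"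
proof (rule LIMSEQ_I)
  fix \<epsilon> :: real assume e: "0 < \<epsilon>"
  define \<epsilon>' where "\<epsilon>' = min (\<epsilon>/8) (1/2)"
  have e': "0 < \<epsilon>'" "\<epsilon>' \<le> \<epsilon>/8" "\<epsilon>' \<le> 1/2" using e by (auto simp: \<epsilon>'_def)
  obtain q :: nat where q: "q > 0" "\<bar>frac (real q * \<alpha>) - \<epsilon>'/2\<bar> < \<epsilon>'/2"
    using Kronecker_approx_1_explicit[OF irr, of "\<epsilon>'/2" "\<epsilon>'/2"] e' by auto
  define \<delta> where "\<delta> = frac (real q * \<alpha>)"
  have d: "0 < \<delta>" "\<delta> < \<epsilon>'" using q(2) unfolding \<delta>_def abs_less_iff by linarith+
  define M where "M = nat \<lfloor>1/\<delta>\<rfloor>"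
  have M1: "real M \<le> 1/\<delta>" "1/\<delta> < real M + 1"
    unfolding M_def using d by (simp_all add: of_nat_nat)
  have Mbig: "2 / real M < \<epsilon>/2 \<and> real M > 0"
  proof -
    have i1: "1/\<delta> > 8/\<epsilon>" using d e' e by (simp add: field_simps)
    have i2: "1/\<delta> \<ge> 2" using d e' by (simp add: field_simps)
    have "real M > 4/\<epsilon>"
    proof -
      have "8/\<epsilon> = 2 * (4/\<epsilon>)" by simp
      then show ?thesis using i1 i2 M1 by linarith
    qed
    then have "4 < real M * \<epsilon>" using e by (simp add: pos_divide_less_eq)
    moreover have "0 < real M" using \<open>real M > 4/\<epsilon>\<close> e by (smt (verit) divide_pos_pos)
    ultimately show ?thesis by (simp add: field_simps)
  qed
  then have Mpos: "real M > 0" by simp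
  have block: "\<bar>(\<Sum>j<M. frac (x + real j * \<delta>)) - real M / 2\<bar> \<le> 2" for x
    unfolding M_def by (rule frac_block) (use d e' in auto)
  have shiftj: "Fs \<alpha> (\<beta> + real j * \<delta>) m = Fs \<alpha> (\<beta> + real (j * q) * \<alpha>) m" for j m
  proof -
    have eq: "\<beta> + real j * \<delta> = (\<beta> + real (j * q) * \<alpha>) + of_int (- (int j * \<lfloor>real q * \<alpha>\<rfloor>))"
      unfolding \<delta>_def frac_def by (simp add: algebra_simps)
    show ?thesis unfolding eq by (rule Fs_int)
  qed
  have main: "\<bar>Fs \<alpha> \<beta> m / real m - 1/2\<bar> \<le> 2 / real M + real M * real q / real m" if m: "m > 0" for m
  proof (rule abstract_bound)
    have blk: "\<And>a. a < m \<Longrightarrow> \<bar>(\<Sum>j<M. frac ((\<beta> + real a * \<alpha>) + real j * \<delta>)) - real M / 2\<bar> \<le> 2"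
      using block by blast
    have "\<bar>(\<Sum>a<m. \<Sum>j<M. frac ((\<beta> + real a * \<alpha>) + real j * \<delta>)) - real m * (real M / 2)\<bar> \<le> real m * 2"
      by (rule sum_dev[OF blk])
    moreover have "real m * (real M / 2) = real m * real M / 2" "real m * 2 = 2 * real m" by simp_all
    ultimately show "\<bar>(\<Sum>j<M. Fs \<alpha> (\<beta> + real j * \<delta>) m) - real m * real M / 2\<bar> \<le> 2 * real m"
      unfolding swap_lemma by simp
    have "\<bar>(\<Sum>j<M. Fs \<alpha> (\<beta> + real j * \<delta>) m) - real M * Fs \<alpha> \<beta> m\<bar> \<le> real M * (real M * real q)"
    proof (rule sum_dev[of M "\<lambda>j. Fs \<alpha> (\<beta> + real j * \<delta>) m", simplified])
      fix j assume "j < M"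
      then have "real (j * q) \<le> real M * real q" by (simp add: mult_right_mono)
      then show "\<bar>Fs \<alpha> (\<beta> + real j * \<delta>) m - Fs \<alpha> \<beta> m\<bar> \<le> real M * real q"
        using Fs_shift[of \<alpha> \<beta> "j*q" m] unfolding shiftj by linarith
    qed
    then show "\<bar>(\<Sum>j<M. Fs \<alpha> (\<beta> + real j * \<delta>) m) - real M * Fs \<alpha> \<beta> m\<bar> \<le> real M * (real M * real q)" .
  qed (use Mpos m in auto)
  obtain m0 :: nat where m0: "real m0 > 2 * real M * real q / \<epsilon>" using reals_Archimedean2 by blast
  show "\<exists>no. \<forall>m\<ge>no. norm (Fs \<alpha> \<beta> m / real m - 1 / 2) < \<epsilon>"
  proof (intro exI allI impI)
    fix m assume mm: "m \<ge> Suc m0"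
    then have mpos: "m > 0" by simp
    have "real m > 2 * real M * real q / \<epsilon>" using mm m0 by linarith
    then have "2 * (real M * real q) < real m * \<epsilon>" using e by (simp add: pos_divide_less_eq mult.commute mult.left_commute)
    then have "real M * real q / real m < \<epsilon> / 2" using e mpos by (simp add: pos_divide_less_eq mult.commute)
    moreover have "2 / real M < \<epsilon>/2" using Mbig by blast
    moreover note main[OF mpos]
    ultimately have "\<bar>Fs \<alpha> \<beta> m / real m - 1 / 2\<bar> < \<epsilon>" by linarith
    then show "norm (Fs \<alpha> \<beta> m / real m - 1 / 2) < \<epsilon>" by (simp only: real_norm_def)
  qed
qed


lemma aux_abs2: "(a::real) - b = c - e \<Longrightarrow> \<bar>e\<bar> \<le> q \<Longrightarrow> \<bar>c\<bar> \<le> q \<Longrightarrow> \<bar>a - b\<bar> \<le> 2 * q"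
  by (simp add: abs_le_iff)

lemma periodic_sum_add:
  fixes u :: "nat \<Rightarrow> real"
  assumes per: "\<And>a. u (a + q) = u a"
  shows "(\<Sum>a<n + q. u a) = (\<Sum>a<n. u a) + (\<Sum>a<q. u a)"
proof (induction n)
  case 0 then show ?case by simp
next
  case (Suc n)
  have "(\<Sum>a<Suc n + q. u a) = (\<Sum>a<n + q. u a) + u (n + q)" by simp
  also have "\<dots> = (\<Sum>a<Suc n. u a) + (\<Sum>a<q. u a)" using Suc per by simp
  finally show ?case .
qed

lemma periodic_sum_mult:
  fixes u :: "nat \<Rightarrow> real"
  assumes per: "\<And>a. u (a + q) = u a"
  shows "(\<Sum>a<r + k * q. u a) = (\<Sum>a<r. u a) + real k * (\<Sum>a<q. u a)"
proof (induction k)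
  case 0 then show ?case by simp
next
  case (Suc k)
  have "(\<Sum>a<r + Suc k * q. u a) = (\<Sum>a<(r + k * q) + q. u a)" by (simp add: algebra_simps)
  also have "\<dots> = (\<Sum>a<r + k * q. u a) + (\<Sum>a<q. u a)" by (rule periodic_sum_add[where u=u and q=q, OF per])
  finally show ?case using Suc by (simp add: algebra_simps)
qed

lemma periodic_cesaro:
  fixes u :: "nat \<Rightarrow> real"
  assumes per: "\<And>a. u (a + q) = u a" and q: "q > 0" and bnd: "\<And>a. \<bar>u a\<bar> \<le> 1"
  shows "(\<lambda>m. (\<Sum>a<m. u a) / real m) \<longlonglongrightarrow> (\<Sum>a<q. u a) / real q"
proof (rule LIMSEQ_I)
  fix \<epsilon> :: real assume e: "\<epsilon> > 0"
  define P where "P = (\<Sum>a<q. u a)"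
  have rb: "\<bar>\<Sum>a<r. u a\<bar> \<le> real r" for r
  proof -
    have "(\<Sum>i<r. \<bar>u i\<bar>) \<le> (\<Sum>i<r. 1)" by (rule sum_mono) (use bnd in auto)
    then have "(\<Sum>i<r. \<bar>u i\<bar>) \<le> real r" by simp
    then show ?thesis using sum_abs[of u "{..<r}"] by linarith
  qed
  have Pb: "\<bar>P\<bar> \<le> real q" unfolding P_def by (rule rb)
  have bound: "\<bar>(\<Sum>a<m. u a) / real m - P / real q\<bar> \<le> 2 * real q / real m" if m: "m > 0" for m
  proof -
    define r k where "r = m mod q" and "k = m div q"
    have mrk: "m = r + k * q" unfolding r_def k_def by simp
    have rq: "r < q" unfolding r_def using q by simp
    have "(\<Sum>a<m. u a) = (\<Sum>a<r. u a) + real k * P" unfolding P_def mrk by (rule periodic_sum_mult[where u=u and q=q, OF per])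
    moreover have "real m = real r + real k * real q" using mrk by simp
    ultimately have "(\<Sum>a<m. u a) - real m * (P / real q) = (\<Sum>a<r. u a) - real r * (P / real q)"
      using q by (simp add: algebra_simps)
    moreover have "\<bar>real r * (P / real q)\<bar> \<le> real q"
    proof -
      have "\<bar>P / real q\<bar> \<le> 1" using Pb q by (simp add: abs_divide divide_le_eq)
      have "\<bar>real r * (P / real q)\<bar> = real r * \<bar>P / real q\<bar>" by (simp only: abs_mult abs_of_nat)
      also have "\<dots> \<le> real r * 1" using \<open>\<bar>P / real q\<bar> \<le> 1\<close> by (intro mult_left_mono) auto
      finally show ?thesis using rq by simp
    qed
    moreover have "\<bar>\<Sum>a<r. u a\<bar> \<le> real q" using rb[of r] rq by simp
    ultimately have num: "\<bar>(\<Sum>a<m. u a) - real m * (P / real q)\<bar> \<le> 2 * real q" by (rule aux_abs2)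
    have "(\<Sum>a<m. u a) / real m - P / real q = ((\<Sum>a<m. u a) - real m * (P / real q)) / real m"
      using m by (simp add: field_simps)
    then have "\<bar>(\<Sum>a<m. u a) / real m - P / real q\<bar> = \<bar>(\<Sum>a<m. u a) - real m * (P / real q)\<bar> / real m"
      using m by (simp add: abs_divide)
    also have "\<dots> \<le> 2 * real q / real m" using num m by (intro divide_right_mono) auto
    finally show ?thesis .
  qed
  obtain m0 :: nat where m0: "real m0 > 2 * real q / \<epsilon>" using reals_Archimedean2 by blast
  show "\<exists>no. \<forall>m\<ge>no. norm ((\<Sum>a<m. u a) / real m - (\<Sum>a<q. u a) / real q) < \<epsilon>"
  proof (intro exI allI impI)
    fix m assume mm: "m \<ge> Suc m0"
    then have mpos: "m > 0" by simp
    have "real m > 2 * real q / \<epsilon>" using mm m0 by linarith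
    then have "2 * real q < real m * \<epsilon>" using e by (simp add: pos_divide_less_eq)
    then have "2 * real q / real m < \<epsilon>" using mpos by (simp add: pos_divide_less_eq mult.commute)
    then show "norm ((\<Sum>a<m. u a) / real m - (\<Sum>a<q. u a) / real q) < \<epsilon>"
      using bound[OF mpos] unfolding P_def by simp
  qed
qed

lemma Fs_rational:
  assumes "\<alpha> \<in> \<rat>"
  shows "\<exists>L. (\<lambda>m. Fs \<alpha> \<beta> m / real m) \<longlonglongrightarrow> L"
proof -
  obtain p q where q: "q > 0" and al: "\<alpha> = of_int p / of_int q" using Rats_cases'[OF assms] by metis
  define u where "u a = frac (\<beta> + real a * \<alpha>)" for a :: nat
  have per: "u (a + nat q) = u a" for a
  proof -
    have "\<beta> + real (a + nat q) * \<alpha> = (\<beta> + real a * \<alpha>) + of_int p"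
      using q unfolding al by (simp add: field_simps)
    then show ?thesis unfolding u_def by (metis add.assoc frac_add_of_int_right)
  qed
  have "(\<lambda>m. (\<Sum>a<m. u a) / real m) \<longlonglongrightarrow> (\<Sum>a<nat q. u a) / real (nat q)"
    by (rule periodic_cesaro[where u=u and q="nat q", OF per]) (use q in \<open>auto simp: u_def frac_lt_1 less_imp_le\<close>)
  then show ?thesis unfolding u_def Fs_def by blast
qed

lemma Fs_conv: "\<exists>L. (\<lambda>m. Fs \<alpha> \<beta> m / real m) \<longlonglongrightarrow> L"
  using Fs_rational Fs_irrational by blast



definition Bset :: "real \<Rightarrow> real \<Rightarrow> real \<Rightarrow> int \<Rightarrow> int set" where
  "Bset s1 s2 s a = {b::int. \<bar>of_int a * s1 + of_int b * s2\<bar> \<le> s}"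

lemma Bset_eq:
  assumes s2: "s2 > 0"
  shows "Bset s1 s2 s a = {\<lceil>(- s - of_int a * s1) / s2\<rceil> .. \<lfloor>(s - of_int a * s1) / s2\<rfloor>}"
proof -
  have key: "(\<bar>of_int a * s1 + of_int b * s2\<bar> \<le> s) \<longleftrightarrow>
        ((- s - of_int a * s1) / s2 \<le> of_int b \<and> of_int b \<le> (s - of_int a * s1) / s2)" for b :: int
  proof -
    have e1: "(- s - of_int a * s1) / s2 \<le> of_int b \<longleftrightarrow> - s - of_int a * s1 \<le> of_int b * s2"
      by (rule pos_divide_le_eq[OF s2])
    have e2: "of_int b \<le> (s - of_int a * s1) / s2 \<longleftrightarrow> of_int b * s2 \<le> s - of_int a * s1"
      by (rule pos_le_divide_eq[OF s2])
    show ?thesis unfolding e1 e2 abs_le_iff by linarith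
  qed
  show ?thesis unfolding Bset_def
  proof (rule set_eqI)
    fix b :: int
    show "b \<in> {b. \<bar>of_int a * s1 + of_int b * s2\<bar> \<le> s} \<longleftrightarrow>
          b \<in> {\<lceil>(- s - of_int a * s1) / s2\<rceil> .. \<lfloor>(s - of_int a * s1) / s2\<rfloor>}"
      unfolding mem_Collect_eq atLeastAtMost_iff ceiling_le_iff le_floor_iff by (rule key)
  qed
qed

lemma card_Bset_real:
  assumes s2: "s2 > 0" and s: "s > 0"
  shows "real (card (Bset s1 s2 s a)) =
     2 * s / s2 + 1 - frac (s / s2 + of_int a * (- (s1 / s2))) - frac (s / s2 + of_int a * (s1 / s2))"
proof -
  define t where "t = (- s - of_int a * s1) / s2"
  define u where "u = (s - of_int a * s1) / s2"
  have ut: "u = t + 2 * s / s2" unfolding t_def u_def using s2 by (simp add: field_simps)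
  have w0: "2 * s / s2 > 0" using s s2 by simp
  have "of_int (\<lceil>t\<rceil> - 1) \<le> u" using ceiling_correct[of t] ut w0 by simp
  then have "\<lceil>t\<rceil> - 1 \<le> \<lfloor>u\<rfloor>" by (simp only: le_floor_iff)
  then have nn: "\<lfloor>u\<rfloor> - \<lceil>t\<rceil> + 1 \<ge> 0" by linarith
  have c: "real (card (Bset s1 s2 s a)) = real_of_int (\<lfloor>u\<rfloor> - \<lceil>t\<rceil> + 1)"
    unfolding Bset_eq[OF s2] t_def[symmetric] u_def[symmetric] using nn by simp
  have e1: "real_of_int \<lfloor>u\<rfloor> = u - frac u" by (simp add: frac_def)
  have e2: "real_of_int \<lceil>t\<rceil> = t + frac (- t)" by (simp add: frac_def ceiling_def)
  have u_eq: "u = s / s2 + of_int a * (- (s1 / s2))" unfolding u_def using s2 by (simp add: field_simps)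
  have t_eq: "- t = s / s2 + of_int a * (s1 / s2)" unfolding t_def using s2 by (simp add: field_simps)
  have "real (card (Bset s1 s2 s a)) = 2 * s / s2 + 1 - frac u - frac (- t)"
    using c e1 e2 ut by simp
  then show ?thesis unfolding u_eq t_eq .
qed



definition Pp :: "real \<Rightarrow> real \<Rightarrow> int \<times> int \<Rightarrow> real \<times> real" where
  "Pp d \<theta> ab = (of_int (fst ab) * d * cos \<theta> + of_int (snd ab) * d * cos (\<theta> + pi/3),
                 of_int (fst ab) * d * sin \<theta> + of_int (snd ab) * d * sin (\<theta> + pi/3))"

lemma hex_range: "hex_lattice d \<theta> = range (Pp d \<theta>)"
  unfolding hex_lattice_def Pp_def by (auto simp: image_iff) (metis fst_conv snd_conv)

lemma Pp_ident:
  "fst (Pp d \<theta> ab) * (d * sin (\<theta> + pi/3)) =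
     of_int (fst ab) * (d * cos \<theta> * (d * sin (\<theta> + pi/3)) - d * cos (\<theta> + pi/3) * (d * sin \<theta>))
     + snd (Pp d \<theta> ab) * (d * cos (\<theta> + pi/3))"
  unfolding Pp_def by (simp add: algebra_simps)

lemma Pp_snd: "snd (Pp d \<theta> ab) = of_int (fst ab) * (d * sin \<theta>) + of_int (snd ab) * (d * sin (\<theta> + pi/3))"
  unfolding Pp_def by simp

lemma D_val: "d * cos \<theta> * (d * sin (\<theta> + pi/3)) - d * cos (\<theta> + pi/3) * (d * sin \<theta>) = d^2 * (sqrt 3 / 2)"
proof -
  have "sin (\<theta> + pi/3 - \<theta>) = sin (\<theta> + pi/3) * cos \<theta> - cos (\<theta> + pi/3) * sin \<theta>" by (rule sin_diff)
  then have "sin (\<theta> + pi/3) * cos \<theta> - cos (\<theta> + pi/3) * sin \<theta> = sqrt 3 / 2" by (simp add: sin_60)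
  then show ?thesis by (simp add: power2_eq_square algebra_simps)
qed

lemma s2_cos: "sin (\<theta> + pi/3) = cos (\<theta> - pi/6)"
proof -
  have "cos (\<theta> - pi/6) = sin (pi/2 - (\<theta> - pi/6))" using cos_sin_eq[of "\<theta> - pi/6"] by simp
  also have "pi/2 - (\<theta> - pi/6) = pi - (\<theta> + pi/3)" by simp
  also have "sin (pi - (\<theta> + pi/3)) = sin (\<theta> + pi/3)" by (rule sin_pi_minus)
  finally show ?thesis by simp
qed

lemma reached_up:
  assumes "reached v s T (x, y)" "s \<ge> 0" "v > 0"
  shows "\<bar>y\<bar> \<le> s \<and> x \<le> v * T"
proof -
  obtain t where t: "0 \<le> t" "t \<le> T" and n: "norm ((s + x - v * t, y) :: real \<times> real) \<le> s"
    using assms(1) unfolding reached_def by auto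
  have "sqrt ((s + x - v * t)^2 + y^2) \<le> s" using n by (simp add: norm_Pair)
  then have sq: "(s + x - v * t)^2 + y^2 \<le> s^2" using assms(2)
    by (metis real_sqrt_le_iff real_sqrt_unique)
  have "y^2 \<le> s^2" using sq by (smt (verit) zero_le_power2)
  then have "\<bar>y\<bar> \<le> s" using assms(2) by (simp add: abs_le_square_iff[symmetric])
  moreover have "(s + x - v * t)^2 \<le> s^2" using sq by (smt (verit) zero_le_power2)
  then have "\<bar>s + x - v * t\<bar> \<le> s" using assms(2) by (simp add: abs_le_square_iff[symmetric])
  then have "x \<le> v * t" by linarith
  moreover have "v * t \<le> v * T" using t assms(3) by simp
  ultimately show ?thesis by linarith
qed

lemma reached_low:
  assumes "0 \<le> x" "x \<le> v * T - s" "\<bar>y\<bar> \<le> s" "v > 0" "s \<ge> 0"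
  shows "reached v s T (x, y)"
proof -
  have "s + x - v * ((s + x) / v) = 0" using assms by simp
  then have h1: "norm ((s + x - v * ((s + x) / v), y) :: real \<times> real) \<le> s" using assms by (simp add: norm_Pair)
  have h2: "(s + x) / v \<in> {0..T}"
    using assms by (auto simp: pos_divide_le_eq mult.commute)
  show ?thesis unfolding reached_def fst_conv snd_conv using h1 h2 by blast
qed



lemma lin_lim:
  fixes h :: "real \<Rightarrow> real"
  assumes h: "((\<lambda>Y. h Y / Y) \<longlongrightarrow> \<mu>) at_top" and a: "a > 0"
  shows "((\<lambda>T. h (a * T + b) / T) \<longlongrightarrow> a * \<mu>) at_top"
proof -
  have fl0: "filterlim (\<lambda>T. b + a * T) at_top at_top"
    by (rule filterlim_tendsto_add_at_top[OF tendsto_const filterlim_tendsto_pos_mult_at_top[OF tendsto_const a filterlim_ident]])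
  have fl: "filterlim (\<lambda>T. a * T + b) at_top at_top"
    using fl0 by (simp add: add.commute)
  have 1: "((\<lambda>T. h (a * T + b) / (a * T + b)) \<longlongrightarrow> \<mu>) at_top"
    using filterlim_compose[OF h fl] by (simp add: o_def)
  have 2: "((\<lambda>T. a + b * inverse T) \<longlongrightarrow> a + b * 0) at_top"
    by (intro tendsto_add tendsto_const tendsto_mult tendsto_inverse_0_at_top filterlim_ident)
  have 3: "((\<lambda>T. h (a * T + b) / (a * T + b) * (a + b * inverse T)) \<longlongrightarrow> \<mu> * a) at_top"
    using tendsto_mult[OF 1 2] by simp
  have ev: "eventually (\<lambda>T. h (a * T + b) / (a * T + b) * (a + b * inverse T) = h (a * T + b) / T) at_top"
  proof -
    have "eventually (\<lambda>T. T > (\<bar>b\<bar> + 1) / a) at_top" by (rule eventually_gt_at_top)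
    then show ?thesis
    proof (rule eventually_mono)
      fix T assume T: "T > (\<bar>b\<bar> + 1) / a"
      then have "a * T > \<bar>b\<bar> + 1" using a by (simp add: pos_divide_less_eq mult.commute)
      then have p1: "a * T + b > 0" by linarith
      have p2: "T > 0" using T a by (smt (verit) divide_pos_pos)
      have "a + b * inverse T = (a * T + b) / T" using p2 by (simp add: field_simps)
      then show "h (a * T + b) / (a * T + b) * (a + b * inverse T) = h (a * T + b) / T"
        using p1 p2 by simp
    qed
  qed
  show ?thesis using tendsto_cong[OF ev] 3 by (simp add: mult.commute)
qed

lemma floor_lim:
  fixes u :: "nat \<Rightarrow> real"
  assumes u: "(\<lambda>m. u m / real m) \<longlonglongrightarrow> \<mu>"
  shows "((\<lambda>Y. u (nat \<lfloor>Y\<rfloor> + 1) / Y) \<longlongrightarrow> \<mu>) at_top"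
proof -
  define g where "g Y = nat \<lfloor>Y\<rfloor> + 1" for Y :: real
  have fl: "filterlim g sequentially at_top"
    unfolding filterlim_at_top
  proof
    fix N :: nat
    have "eventually (\<lambda>Y. Y \<ge> real N) at_top" by (rule eventually_ge_at_top)
    then show "eventually (\<lambda>Y. N \<le> g Y) at_top"
    proof (rule eventually_mono)
      fix Y :: real assume "real N \<le> Y"
      then have "of_int (int N) \<le> Y" by simp
      then have "int N \<le> \<lfloor>Y\<rfloor>" by (simp only: le_floor_iff)
      then have "N \<le> nat \<lfloor>Y\<rfloor>" by linarith
      then show "N \<le> g Y" by (simp add: g_def)
    qed
  qed
  have 1: "((\<lambda>Y. u (g Y) / real (g Y)) \<longlongrightarrow> \<mu>) at_top"
    using filterlim_compose[OF u fl] by (simp add: o_def)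
  have 2: "((\<lambda>Y. real (g Y) / Y) \<longlongrightarrow> 1) at_top"
  proof (rule real_tendsto_sandwich)
    show "eventually (\<lambda>Y. 1 \<le> real (g Y) / Y) at_top"
      using eventually_ge_at_top[of "1::real"]
    proof (rule eventually_mono)
      fix Y :: real assume Y: "1 \<le> Y"
      have "Y \<le> real (g Y)" unfolding g_def using Y by (simp add: of_nat_nat) linarith
      then show "1 \<le> real (g Y) / Y" using Y by simp
    qed
    show "eventually (\<lambda>Y. real (g Y) / Y \<le> 1 + inverse Y) at_top"
      using eventually_ge_at_top[of "1::real"]
    proof (rule eventually_mono)
      fix Y :: real assume Y: "1 \<le> Y"
      have "real (g Y) \<le> Y + 1" unfolding g_def using Y by (simp add: of_nat_nat)
      then show "real (g Y) / Y \<le> 1 + inverse Y" using Y by (simp add: field_simps)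
    qed
    show "((\<lambda>Y::real. 1::real) \<longlongrightarrow> 1) at_top" by simp
    have "((\<lambda>Y::real. 1 + inverse Y) \<longlongrightarrow> 1 + 0) at_top"
      by (rule tendsto_add[OF tendsto_const tendsto_inverse_0_at_top[OF filterlim_ident]])
    then show "((\<lambda>Y::real. 1 + inverse Y) \<longlongrightarrow> 1) at_top" by simp
  qed
  have ev: "eventually (\<lambda>Y. u (g Y) / real (g Y) * (real (g Y) / Y) = u (nat \<lfloor>Y\<rfloor> + 1) / Y) at_top"
    by (rule always_eventually) (simp add: g_def)
  show ?thesis using tendsto_cong[OF ev] tendsto_mult[OF 1 2] by simp
qed



lemma sum_int_nat:
  fixes f :: "int \<Rightarrow> nat"
  assumes "k \<ge> 0"
  shows "(\<Sum>a\<in>{0..k}. f a) = (\<Sum>a<nat k + 1. f (int a))"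
proof -
  have "{0..k} = int ` {..<nat k + 1}"
  proof
    show "{0..k} \<subseteq> int ` {..<nat k + 1}"
    proof
      fix x assume "x \<in> {0..k}"
      then have "x = int (nat x)" "nat x < nat k + 1" by auto
      then show "x \<in> int ` {..<nat k + 1}" by blast
    qed
    show "int ` {..<nat k + 1} \<subseteq> {0..k}" using assms by auto
  qed
  then show ?thesis by (simp add: sum.reindex)
qed

lemma sum_int_nat_le:
  fixes f :: "int \<Rightarrow> nat"
  shows "(\<Sum>a\<in>{0..k}. f a) \<le> (\<Sum>a<nat k + 1. f (int a))"
  using sum_int_nat[of k f] by (cases "k \<ge> 0") auto

lemma sum_cover_le:
  fixes f :: "int \<Rightarrow> nat"
  assumes "A \<subseteq> B \<union> C" "finite B" "finite C"
  shows "sum f A \<le> sum f B + sum f C"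
proof -
  have "sum f A \<le> sum f (B \<union> C)" using assms by (intro sum_mono2) auto
  also have "\<dots> \<le> sum f B + sum f C" using sum_Un_nat[OF assms(2,3), of f] by simp
  finally show ?thesis .
qed

theorem proposition6:
  fixes v d s \<theta> :: real
  assumes "v > 0" and "d > 0" and "s \<ge> d / 2"
    and "0 \<le> \<theta>" and "\<theta> < pi / 3"
  shows "\<exists>L. ((\<lambda>T. f_h v d s T \<theta>) \<longlongrightarrow> L) at_top \<and>
     L \<in> {4 * v * s / (sqrt 3 * d^2) - 2 * v * cos (\<theta> - pi/6) / (sqrt 3 * d) <..
          4 * v * s / (sqrt 3 * d^2) + 2 * v * cos (\<theta> - pi/6) / (sqrt 3 * d)}"
proof -
  note v = assms(1) and d = assms(2) and sd = assms(3) and th0 = assms(4) and th1 = assms(5)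
  define s1 where "s1 = d * sin \<theta>"
  define s2 where "s2 = d * sin (\<theta> + pi/3)"
  define c2 where "c2 = d * cos (\<theta> + pi/3)"
  define D where "D = d * cos \<theta> * (d * sin (\<theta> + pi/3)) - d * cos (\<theta> + pi/3) * (d * sin \<theta>)"
  define E where "E = s * \<bar>c2\<bar>"
  define w where "w = 2 * s / s2"
  define nb where "nb a = card (Bset s1 s2 s a)" for a
  define Sm where "Sm m = (\<Sum>a<m. nb (int a))" for m
  have s0: "s > 0" using d sd by linarith
  have s2pos: "s2 > 0"
  proof -
    have "0 < \<theta> + pi/3" "\<theta> + pi/3 < pi" using th0 th1 pi_gt_zero by linarith+
    then have "sin (\<theta> + pi/3) > 0" by (rule sin_gt_zero)
    then show ?thesis unfolding s2_def using d by simp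
  qed
  have Dval: "D = d^2 * (sqrt 3 / 2)" unfolding D_def by (rule D_val)
  have Dpos: "D > 0" unfolding Dval using d by simp
  have E0: "E \<ge> 0" unfolding E_def using s0 by simp
  have w0: "w > 0" unfolding w_def using s0 s2pos by simp

  have nb_real: "real (nb a) = w + 1 - frac (s / s2 + of_int a * (- (s1 / s2))) - frac (s / s2 + of_int a * (s1 / s2))" for a
    unfolding nb_def w_def by (rule card_Bset_real[OF s2pos s0])
  have nb_up: "real (nb a) \<le> w + 1" for a
    using nb_real[of a] frac_ge_0[of "s / s2 + of_int a * (- (s1 / s2))"] frac_ge_0[of "s / s2 + of_int a * (s1 / s2)"]
    by linarith
  have nb_lo: "of_int \<lfloor>w\<rfloor> \<le> real (nb a)" for a
  proof -
    have "real (nb a) > w - 1"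
      using nb_real[of a] frac_lt_1[of "s / s2 + of_int a * (- (s1 / s2))"] frac_lt_1[of "s / s2 + of_int a * (s1 / s2)"]
      by linarith
    moreover have "of_int \<lfloor>w\<rfloor> \<le> w" by (rule of_int_floor_le)
    ultimately have "of_int \<lfloor>w\<rfloor> < real (nb a) + 1" by linarith
    then have "of_int \<lfloor>w\<rfloor> < (of_int (int (nb a) + 1) :: real)" by simp
    then have "\<lfloor>w\<rfloor> < int (nb a) + 1" by (simp only: of_int_less_iff)
    then have "\<lfloor>w\<rfloor> \<le> int (nb a)" by linarith
    then show ?thesis by (metis of_int_of_nat_eq of_int_le_iff)
  qed
  have Sm_eq: "real (Sm m) = real m * (w + 1) - Fs (- (s1 / s2)) (s / s2) m - Fs (s1 / s2) (s / s2) m" for m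
  proof -
    have "real (Sm m) = (\<Sum>a<m. real (nb (int a)))" unfolding Sm_def by simp
    also have "\<dots> = (\<Sum>a<m. (w + 1) - frac (s / s2 + real a * (- (s1 / s2))) - frac (s / s2 + real a * (s1 / s2)))"
      by (rule sum.cong) (simp_all add: nb_real)
    also have "\<dots> = real m * (w + 1) - Fs (- (s1 / s2)) (s / s2) m - Fs (s1 / s2) (s / s2) m"
      unfolding Fs_def by (simp add: sum_subtractf)
    finally show ?thesis .
  qed
  obtain L1 where L1: "(\<lambda>m. Fs (- (s1 / s2)) (s / s2) m / real m) \<longlonglongrightarrow> L1" using Fs_conv by blast
  obtain L2 where L2: "(\<lambda>m. Fs (s1 / s2) (s / s2) m / real m) \<longlonglongrightarrow> L2" using Fs_conv by blast
  define \<mu> where "\<mu> = (w + 1) - L1 - L2"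
  have Smlim: "(\<lambda>m. real (Sm m) / real m) \<longlonglongrightarrow> \<mu>"
  proof -
    have "(\<lambda>m. (w + 1) - Fs (- (s1 / s2)) (s / s2) m / real m - Fs (s1 / s2) (s / s2) m / real m) \<longlonglongrightarrow> \<mu>"
      unfolding \<mu>_def by (intro tendsto_diff tendsto_const L1 L2)
    moreover have "eventually (\<lambda>m. (w + 1) - Fs (- (s1 / s2)) (s / s2) m / real m - Fs (s1 / s2) (s / s2) m / real m
                     = real (Sm m) / real m) sequentially"
      using eventually_gt_at_top[of "0::nat"]
    proof (rule eventually_mono)
      fix m :: nat assume "m > 0"
      then show "(w + 1) - Fs (- (s1 / s2)) (s / s2) m / real m - Fs (s1 / s2) (s / s2) m / real m
                     = real (Sm m) / real m"
        unfolding Sm_eq by (simp add: field_simps)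
    qed
    ultimately show ?thesis by (rule Lim_transform_eventually)
  qed
  have mu_lo: "of_int \<lfloor>w\<rfloor> \<le> \<mu>"
  proof (rule LIMSEQ_le_const[OF Smlim])
    show "\<exists>N. \<forall>m\<ge>N. of_int \<lfloor>w\<rfloor> \<le> real (Sm m) / real m"
    proof (intro exI allI impI)
      fix m :: nat assume "m \<ge> 1"
      have "(\<Sum>a<m. (of_int \<lfloor>w\<rfloor> :: real)) \<le> (\<Sum>a<m. real (nb (int a)))" by (intro sum_mono nb_lo)
      then have "real m * of_int \<lfloor>w\<rfloor> \<le> real (Sm m)" unfolding Sm_def by simp
      then show "of_int \<lfloor>w\<rfloor> \<le> real (Sm m) / real m" using \<open>m \<ge> 1\<close> by (simp add: pos_le_divide_eq mult.commute)
    qed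
  qed
  have mu_up: "\<mu> \<le> w + 1"
  proof (rule LIMSEQ_le_const2[OF Smlim])
    show "\<exists>N. \<forall>m\<ge>N. real (Sm m) / real m \<le> w + 1"
    proof (intro exI allI impI)
      fix m :: nat assume "m \<ge> 1"
      have "(\<Sum>a<m. real (nb (int a))) \<le> (\<Sum>a<m. w + 1)" by (intro sum_mono nb_up)
      then have "real (Sm m) \<le> real m * (w + 1)" unfolding Sm_def by simp
      then show "real (Sm m) / real m \<le> w + 1" using \<open>m \<ge> 1\<close> by (simp add: pos_divide_le_eq mult.commute)
    qed
  qed

  define P where "P = Pp d \<theta>"
  have P_id: "fst (P ab) * s2 = of_int (fst ab) * D + snd (P ab) * c2" for ab
    unfolding P_def s2_def D_def c2_def by (rule Pp_ident)
  have P_snd: "snd (P ab) = of_int (fst ab) * s1 + of_int (snd ab) * s2" for ab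
    unfolding P_def s1_def s2_def by (rule Pp_snd)
  have injP: "inj P"
  proof (rule injI)
    fix ab ab' assume eq: "P ab = P ab'"
    have e1: "of_int (fst ab) * D = fst (P ab) * s2 - snd (P ab) * c2" using P_id[of ab] by linarith
    have e2: "of_int (fst ab') * D = fst (P ab') * s2 - snd (P ab') * c2" using P_id[of ab'] by linarith
    have "of_int (fst ab) * D = of_int (fst ab') * D" unfolding e1 e2 eq ..
    then have a: "fst ab = fst ab'" using Dpos by simp
    have e3: "of_int (snd ab) * s2 = snd (P ab) - of_int (fst ab) * s1" using P_snd[of ab] by linarith
    have e4: "of_int (snd ab') * s2 = snd (P ab') - of_int (fst ab') * s1" using P_snd[of ab'] by linarith
    have "of_int (snd ab) * s2 = of_int (snd ab') * s2" unfolding e3 e4 eq a ..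
    then have "snd ab = snd ab'" using s2pos by simp
    then show "ab = ab'" using a by (simp add: prod_eq_iff)
  qed
  define Pairs where "Pairs T = {ab. 0 \<le> fst (P ab) \<and> reached v s T (P ab)}" for T
  have Ncard: "N_reached v d s \<theta> T = card (Pairs T)" for T
  proof -
    have "{q \<in> hex_lattice d \<theta>. 0 \<le> fst q \<and> reached v s T q} = P ` Pairs T"
      unfolding hex_range Pairs_def P_def by auto
    moreover have "card (P ` Pairs T) = card (Pairs T)"
      by (rule card_image) (rule inj_on_subset[OF injP], simp)
    ultimately show ?thesis unfolding N_reached_def by simp
  qed
  have finB: "finite (Bset s1 s2 s a)" for a unfolding Bset_eq[OF s2pos] by simp
  have memB: "snd ab \<in> Bset s1 s2 s (fst ab) \<longleftrightarrow> \<bar>snd (P ab)\<bar> \<le> s" for ab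
    unfolding Bset_def P_snd by simp
  define Cn where "Cn lo hi = (\<Sum>a\<in>{\<lceil>lo\<rceil>..\<lfloor>hi\<rfloor>}. nb a)" for lo hi :: real
  have Sig_card: "card (SIGMA a:{\<lceil>lo\<rceil>..\<lfloor>hi\<rfloor>}. Bset s1 s2 s a) = Cn lo hi" for lo hi
    unfolding Cn_def nb_def by (rule card_SigmaI) (auto simp: finB)
  have yc2: "\<bar>snd (P ab) * c2\<bar> \<le> E" if "\<bar>snd (P ab)\<bar> \<le> s" for ab
  proof -
    have "\<bar>snd (P ab) * c2\<bar> = \<bar>snd (P ab)\<bar> * \<bar>c2\<bar>" by (rule abs_mult)
    also have "\<dots> \<le> s * \<bar>c2\<bar>" using that by (intro mult_right_mono) auto
    finally show ?thesis unfolding E_def .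
  qed
  define K where "K = v * s2 / D"
  have Kpos: "K > 0" unfolding K_def using v s2pos Dpos by simp
  define hiU where "hiU T = K * T + E / D" for T
  define hiL where "hiL T = K * T + (- (s * s2 + E) / D)" for T
  have upper_sub: "Pairs T \<subseteq> (SIGMA a:{\<lceil>- E / D\<rceil>..\<lfloor>hiU T\<rfloor>}. Bset s1 s2 s a)" for T
  proof
    fix ab assume "ab \<in> Pairs T"
    then have x0: "0 \<le> fst (P ab)" and r: "reached v s T (P ab)" unfolding Pairs_def by auto
    have r': "reached v s T (fst (P ab), snd (P ab))" using r by simp
    from reached_up[OF r' less_imp_le[OF s0] v] have y: "\<bar>snd (P ab)\<bar> \<le> s" and xT: "fst (P ab) \<le> v * T" by auto
    have yE: "\<bar>snd (P ab) * c2\<bar> \<le> E" by (rule yc2[OF y])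
    have "fst (P ab) * s2 \<ge> 0" using x0 s2pos by simp
    have "fst (P ab) * s2 \<le> v * T * s2" using xT s2pos by (intro mult_right_mono) auto
    have aD1: "- E \<le> of_int (fst ab) * D" using P_id[of ab] yE \<open>fst (P ab) * s2 \<ge> 0\<close> by linarith
    have aD2: "of_int (fst ab) * D \<le> v * T * s2 + E"
      using P_id[of ab] yE \<open>fst (P ab) * s2 \<le> v * T * s2\<close> by linarith
    have "- E / D \<le> of_int (fst ab)" using aD1 by (simp only: pos_divide_le_eq[OF Dpos])
    then have lo: "\<lceil>- E / D\<rceil> \<le> fst ab" by (simp add: ceiling_le_iff)
    have "of_int (fst ab) \<le> (v * T * s2 + E) / D" using aD2 Dpos by (simp add: pos_le_divide_eq)
    also have "(v * T * s2 + E) / D = hiU T" unfolding hiU_def K_def using Dpos by (simp add: field_simps)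
    finally have hi: "fst ab \<le> \<lfloor>hiU T\<rfloor>" by (simp add: le_floor_iff)
    have "snd ab \<in> Bset s1 s2 s (fst ab)" using memB y by simp
    then show "ab \<in> (SIGMA a:{\<lceil>- E / D\<rceil>..\<lfloor>hiU T\<rfloor>}. Bset s1 s2 s a)" using lo hi
      by (cases ab) auto
  qed
  have finPairs: "finite (Pairs T)" for T
    by (rule finite_subset[OF upper_sub]) (auto simp: finB)
  have lower_sub: "(SIGMA a:{\<lceil>E / D\<rceil>..\<lfloor>hiL T\<rfloor>}. Bset s1 s2 s a) \<subseteq> Pairs T" for T
  proof
    fix ab assume "ab \<in> (SIGMA a:{\<lceil>E / D\<rceil>..\<lfloor>hiL T\<rfloor>}. Bset s1 s2 s a)"
    then have lo: "\<lceil>E / D\<rceil> \<le> fst ab" and hi: "fst ab \<le> \<lfloor>hiL T\<rfloor>" and b: "snd ab \<in> Bset s1 s2 s (fst ab)"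
      by (cases ab, auto)+
    have y: "\<bar>snd (P ab)\<bar> \<le> s" using memB b by simp
    have yE: "\<bar>snd (P ab) * c2\<bar> \<le> E" by (rule yc2[OF y])
    have "E / D \<le> of_int (fst ab)" using lo by (simp add: ceiling_le_iff)
    then have aD1: "E \<le> of_int (fst ab) * D" using Dpos by (simp add: pos_divide_le_eq)
    have "of_int (fst ab) \<le> hiL T" using hi by (simp add: le_floor_iff)
    also have "hiL T = ((v * T - s) * s2 - E) / D" unfolding hiL_def K_def using Dpos by (simp add: field_simps)
    finally have aD2: "of_int (fst ab) * D \<le> (v * T - s) * s2 - E" using Dpos by (simp add: pos_le_divide_eq)
    have "0 \<le> fst (P ab) * s2" using P_id[of ab] yE aD1 by linarith
    then have x0: "0 \<le> fst (P ab)" using s2pos by (simp add: zero_le_mult_iff)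
    have "fst (P ab) * s2 \<le> (v * T - s) * s2" using P_id[of ab] yE aD2 by linarith
    then have x1: "fst (P ab) \<le> v * T - s" using s2pos by simp
    have "reached v s T (fst (P ab), snd (P ab))" by (rule reached_low[OF x0 x1 y v less_imp_le[OF s0]])
    then show "ab \<in> Pairs T" unfolding Pairs_def using x0 by simp
  qed
  define C0 where "C0 = (\<Sum>a\<in>{\<lceil>- E / D\<rceil>..0}. nb a)"
  define C1 where "C1 = (\<Sum>a\<in>{0..\<lfloor>E / D\<rfloor>}. nb a)"
  define H where "H Y = real (Sm (nat \<lfloor>Y\<rfloor> + 1))" for Y :: real
  have Nup: "real (N_reached v d s \<theta> T) \<le> real C0 + H (hiU T)" for T
  proof -
    have "N_reached v d s \<theta> T \<le> Cn (- E / D) (hiU T)"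
      unfolding Ncard Sig_card[symmetric] by (rule card_mono[OF _ upper_sub]) (auto simp: finB)
    also have "Cn (- E / D) (hiU T) \<le> C0 + (\<Sum>a\<in>{0..\<lfloor>hiU T\<rfloor>}. nb a)"
      unfolding Cn_def C0_def by (rule sum_cover_le) auto
    also have "(\<Sum>a\<in>{0..\<lfloor>hiU T\<rfloor>}. nb a) \<le> Sm (nat \<lfloor>hiU T\<rfloor> + 1)"
      unfolding Sm_def by (rule sum_int_nat_le)
    finally show ?thesis unfolding H_def by simp
  qed
  have Nlo: "H (hiL T) - real C1 \<le> real (N_reached v d s \<theta> T)" if hL: "hiL T \<ge> 0" for T
  proof -
    have "Sm (nat \<lfloor>hiL T\<rfloor> + 1) = (\<Sum>a\<in>{0..\<lfloor>hiL T\<rfloor>}. nb a)"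
      unfolding Sm_def using hL by (intro sum_int_nat[symmetric]) simp
    also have "\<dots> \<le> C1 + Cn (E / D) (hiL T)"
      unfolding Cn_def C1_def
    proof (rule sum_cover_le)
      show "{0..\<lfloor>hiL T\<rfloor>} \<subseteq> {0..\<lfloor>E / D\<rfloor>} \<union> {\<lceil>E / D\<rceil>..\<lfloor>hiL T\<rfloor>}"
      proof
        fix a assume "a \<in> {0..\<lfloor>hiL T\<rfloor>}"
        moreover have "a \<le> \<lfloor>E / D\<rfloor> \<or> \<lceil>E / D\<rceil> \<le> a"
          by (smt (verit) ceiling_le_iff le_floor_iff of_int_less_iff floor_less_iff)
        ultimately show "a \<in> {0..\<lfloor>E / D\<rfloor>} \<union> {\<lceil>E / D\<rceil>..\<lfloor>hiL T\<rfloor>}" by auto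
      qed
    qed auto
    also have "Cn (E / D) (hiL T) \<le> N_reached v d s \<theta> T"
      unfolding Ncard Sig_card[symmetric] by (rule card_mono[OF finPairs lower_sub])
    finally show ?thesis unfolding H_def by simp
  qed

  have Hlim: "((\<lambda>Y. H Y / Y) \<longlongrightarrow> \<mu>) at_top"
    unfolding H_def by (rule floor_lim[OF Smlim])
  have inv0: "((\<lambda>T::real. c * inverse T) \<longlongrightarrow> 0) at_top" for c :: real
    using tendsto_mult[OF tendsto_const[of c] tendsto_inverse_0_at_top[OF filterlim_ident]] by simp
  have Ulim: "((\<lambda>T. (real C0 + H (hiU T)) / T) \<longlongrightarrow> K * \<mu>) at_top"
  proof -
    have "((\<lambda>T. real C0 * inverse T + H (K * T + E / D) / T) \<longlongrightarrow> 0 + K * \<mu>) at_top"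
      by (intro tendsto_add inv0 lin_lim[OF Hlim Kpos])
    then show ?thesis unfolding hiU_def by (simp add: divide_inverse distrib_right)
  qed
  have Llim: "((\<lambda>T. (H (hiL T) - real C1) / T) \<longlongrightarrow> K * \<mu>) at_top"
  proof -
    have "((\<lambda>T. H (K * T + (- (s * s2 + E) / D)) / T - real C1 * inverse T) \<longlongrightarrow> K * \<mu> - 0) at_top"
      by (intro tendsto_diff inv0 lin_lim[OF Hlim Kpos])
    then show ?thesis unfolding hiL_def by (simp add: divide_inverse left_diff_distrib)
  qed
  define T0 where "T0 = max 1 (((s * s2 + E) / D) / K)"
  have Nlim: "((\<lambda>T. real (N_reached v d s \<theta> T) / T) \<longlongrightarrow> K * \<mu>) at_top"
  proof (rule real_tendsto_sandwich[OF _ _ Llim Ulim])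
    show "eventually (\<lambda>T. (H (hiL T) - real C1) / T \<le> real (N_reached v d s \<theta> T) / T) at_top"
      using eventually_ge_at_top[of T0]
    proof (rule eventually_mono)
      fix T assume T: "T0 \<le> T"
      then have Tpos: "T > 0" unfolding T0_def by linarith
      have "((s * s2 + E) / D) / K \<le> T" using T unfolding T0_def by linarith
      then have "(s * s2 + E) / D \<le> T * K" by (simp only: pos_divide_le_eq[OF Kpos])
      then have "(s * s2 + E) / D \<le> K * T" by (simp only: mult.commute)
      then have "hiL T \<ge> 0" unfolding hiL_def minus_divide_left[symmetric] by linarith
      then show "(H (hiL T) - real C1) / T \<le> real (N_reached v d s \<theta> T) / T"
        using Nlo Tpos by (intro divide_right_mono) auto
    qed
    show "eventually (\<lambda>T. real (N_reached v d s \<theta> T) / T \<le> (real C0 + H (hiU T)) / T) at_top"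
      using eventually_gt_at_top[of "0::real"]
    proof (rule eventually_mono)
      fix T :: real assume "0 < T"
      then show "real (N_reached v d s \<theta> T) / T \<le> (real C0 + H (hiU T)) / T"
        using Nup by (intro divide_right_mono) auto
    qed
  qed
  have flim: "((\<lambda>T. f_h v d s T \<theta>) \<longlongrightarrow> K * \<mu>) at_top"
  proof -
    have "((\<lambda>T. real (N_reached v d s \<theta> T) / T - 1 * inverse T) \<longlongrightarrow> K * \<mu> - 0) at_top"
      by (intro tendsto_diff Nlim inv0)
    then show ?thesis unfolding f_h_def by (simp add: divide_inverse left_diff_distrib)
  qed

  have sq3: "sqrt 3 > 0" by simp
  have KB: "K = 2 * v * cos (\<theta> - pi/6) / (sqrt 3 * d)"
    unfolding K_def s2_def Dval s2_cos using d sq3 by (simp add: field_simps power2_eq_square)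
  have KA: "K * w = 4 * v * s / (sqrt 3 * d^2)"
    unfolding K_def w_def Dval using d sq3 s2pos by (simp add: field_simps power2_eq_square)
  have "K * (w - 1) < K * \<mu>"
  proof -
    have "w - 1 < of_int \<lfloor>w\<rfloor>" by linarith
    then have "w - 1 < \<mu>" using mu_lo by linarith
    then show ?thesis using Kpos by simp
  qed
  moreover have "K * \<mu> \<le> K * (w + 1)" using mu_up Kpos by simp
  ultimately have "K * \<mu> \<in> {K * w - K <.. K * w + K}" by (simp add: algebra_simps)
  then show ?thesis using flim unfolding KA[symmetric] KB[symmetric] by blast
qed


end
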